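(* Every fragile graph $G$ with $|V(G)|\geq 4$ satisfies $|E(G)|\leq 2.5|V(G)|-5$. Consequently every non-null fragile graph has a vertex of degree at most $4$.
   Context: All graphs are finite and simple. A graph is $k$-connected if it has at least $k+1$ vertices and no vertex cutset with at most $k-1$ vertices. A graph is fragile if it has no $3$-connected subgraph. *)

theory Defs
  imports Complex_Main
begin

definition graph :: "'a set \<Rightarrow> 'a set set \<Rightarrow> bool" where
  "graph V E \<longleftrightarrow> finite V \<and> (\<forall>e\<in>E. \<exists>u v. u \<noteq> v \<and> e = {u, v} \<and> u \<in> V \<and> v \<in> V)"

definition subgraph :: "'a set \<Rightarrow> 'a set set \<Rightarrow> 'a set \<Rightarrow> 'a set set \<Rightarrow> bool" where
  "subgraph W F V E \<longleftrightarrow> W \<subseteq> V \<and> F \<subseteq> E \<and> graph W F"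

definition adj :: "'a set set \<Rightarrow> 'a \<Rightarrow> 'a \<Rightarrow> bool" where
  "adj E u v \<longleftrightarrow> {u, v} \<in> E"

definition connected_graph :: "'a set \<Rightarrow> 'a set set \<Rightarrow> bool" where
  "connected_graph V E \<longleftrightarrow> (\<forall>u\<in>V. \<forall>v\<in>V. (adj E)\<^sup>*\<^sup>* u v)"

definition del_edges :: "'a set \<Rightarrow> 'a set set \<Rightarrow> 'a set set" where
  "del_edges S E = {e \<in> E. e \<inter> S = {}}"

definition k_connected :: "nat \<Rightarrow> 'a set \<Rightarrow> 'a set set \<Rightarrow> bool" where
  "k_connected k V E \<longleftrightarrow> card V \<ge> k + 1 \<and>
     (\<forall>S. S \<subseteq> V \<and> card S \<le> k - 1 \<longrightarrow> connected_graph (V - S) (del_edges S E))"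

definition fragile :: "'a set \<Rightarrow> 'a set set \<Rightarrow> bool" where
  "fragile V E \<longleftrightarrow> \<not> (\<exists>W F. subgraph W F V E \<and> k_connected 3 W F)"

definition degree :: "'a set set \<Rightarrow> 'a \<Rightarrow> nat" where
  "degree E v = card {e \<in> E. v \<in> e}"

end

theory Submission
  imports Defs
begin

lemma graph_edge: "graph V E \<Longrightarrow> e \<in> E \<Longrightarrow> \<exists>u v. u \<noteq> v \<and> e = {u, v} \<and> u \<in> V \<and> v \<in> V"
  by (auto simp: graph_def)

lemma graph_finE: assumes "graph V E" shows "finite E"
proof -
  have "E \<subseteq> Pow V" using assms by (force simp: graph_def)
  moreover have "finite V" using assms by (simp add: graph_def)
  ultimately show ?thesis by (meson finite_Pow_iff finite_subset)
qed

lemma deg_le: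
  assumes g: "graph W F" and u: "u \<in> W"
  shows "card {e\<in>F. u\<in>e} \<le> card W - 1"
proof -
  have fin: "finite W" using g by (simp add: graph_def)
  have "{e\<in>F. u\<in>e} \<subseteq> (\<lambda>x. {u,x}) ` (W - {u})"
  proof
    fix e assume "e \<in> {e\<in>F. u\<in>e}"
    then have e: "e \<in> F" "u \<in> e" by auto
    obtain a b where ab: "a \<noteq> b" "e = {a,b}" "a \<in> W" "b \<in> W" using graph_edge[OF g e(1)] by blast
    show "e \<in> (\<lambda>x. {u,x}) ` (W - {u})"
    proof (cases "u = a")
      case True then show ?thesis using ab by auto
    next
      case False then have "u = b" using ab e by auto
      then show ?thesis using ab by (auto simp: insert_commute)
    qed
  qed
  then have "card {e\<in>F. u\<in>e} \<le> card ((\<lambda>x. {u,x}) ` (W - {u}))"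
    using fin by (intro card_mono) auto
  also have "\<dots> \<le> card (W - {u})" using fin by (intro card_image_le) auto
  also have "\<dots> = card W - 1" using u fin by simp
  finally show ?thesis .
qed

lemma card_edges:
  assumes g: "graph V E" shows "card E \<le> card V choose 2"
proof -
  have fin: "finite V" using g by (simp add: graph_def)
  have "E \<subseteq> {B. B \<subseteq> V \<and> card B = 2}"
  proof
    fix e assume "e \<in> E"
    then obtain a b where "a \<noteq> b" "e = {a,b}" "a \<in> V" "b \<in> V" using graph_edge[OF g] by blast
    then show "e \<in> {B. B \<subseteq> V \<and> card B = 2}" by auto
  qed
  moreover have "finite {B. B \<subseteq> V \<and> card B = 2}" using fin by auto
  ultimately have "card E \<le> card {B. B \<subseteq> V \<and> card B = 2}" by (rule card_mono[rotated])
  also have "\<dots> = card V choose 2" using n_subsets[OF fin] by simp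
  finally show ?thesis .
qed

lemma sub_fragile: "fragile V E \<Longrightarrow> W \<subseteq> V \<Longrightarrow> F \<subseteq> E \<Longrightarrow> graph W F \<Longrightarrow> fragile W F"
proof -
  assume f: "fragile V E" and WV: "W \<subseteq> V" and FE: "F \<subseteq> E" and g: "graph W F"
  show "fragile W F" unfolding fragile_def
  proof
    assume "\<exists>X G. subgraph X G W F \<and> k_connected 3 X G"
    then obtain X G where s: "subgraph X G W F" and k: "k_connected 3 X G" by blast
    have "subgraph X G V E" using s WV FE unfolding subgraph_def by (meson order_trans)
    then show False using f k unfolding fragile_def by blast
  qed
qed

lemma main:
  "graph V E \<Longrightarrow> fragile V E \<Longrightarrow> card V = n \<Longrightarrow> 4 \<le> n \<Longrightarrow> 2 * card E \<le> 5 * n - 10"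
proof (induction n arbitrary: V E rule: less_induct)
  case (less n)
  have g: "graph V E" and fr: "fragile V E" and cV: "card V = n" and n4: "4 \<le> n" using less.prems by auto
  have fin: "finite V" using g by (simp add: graph_def)
  have finE: "finite E" using graph_finE[OF g] .
  show ?case
  proof (cases "\<exists>v\<in>V. card {e\<in>E. v\<in>e} \<le> 2")
    case True
    then obtain v where v: "v \<in> V" and dv: "card {e\<in>E. v\<in>e} \<le> 2" by blast
    define V' where "V' = V - {v}"
    define E' where "E' = {e\<in>E. v \<notin> e}"
    have g': "graph V' E'"
      unfolding graph_def V'_def E'_def
    proof (intro conjI ballI)
      show "finite (V - {v})" using fin by simp
    next
      fix e assume "e \<in> {e \<in> E. v \<notin> e}"
      then show "\<exists>u va. u \<noteq> va \<and> e = {u, va} \<and> u \<in> V - {v} \<and> va \<in> V - {v}"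
        using graph_edge[OF g] by fastforce
    qed
    have fr': "fragile V' E'" using sub_fragile[OF fr _ _ g'] by (auto simp: V'_def E'_def)
    have cV': "card V' = n - 1" using cV v fin by (simp add: V'_def)
    have "E = E' \<union> {e\<in>E. v\<in>e}" by (auto simp: E'_def)
    moreover have "E' \<inter> {e\<in>E. v\<in>e} = {}" by (auto simp: E'_def)
    ultimately have cE: "card E = card E' + card {e\<in>E. v\<in>e}"
      using finE by (metis card_Un_disjoint finite_Un)
    show ?thesis
    proof (cases "n = 4")
      case True
      have "card E' \<le> 3" using card_edges[OF g'] cV' True by (simp add: numeral_eq_Suc)
      then show ?thesis using cE dv True by simp
    next
      case False
      have "2 * card E' \<le> 5 * (n - 1) - 10"
        using less.IH[of "n - 1" V' E'] g' fr' cV' False n4 by simp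
      then show ?thesis using cE dv n4 False by simp
    qed
  next
    case False
    then have deg3: "\<And>v. v \<in> V \<Longrightarrow> 3 \<le> card {e\<in>E. v\<in>e}" by force
    have "\<not> k_connected 3 V E" using fr g unfolding fragile_def subgraph_def by blast
    then obtain S where S: "S \<subseteq> V" "card S \<le> 2" and nc: "\<not> connected_graph (V - S) (del_edges S E)"
      using cV n4 unfolding k_connected_def by auto
    define E' where "E' = del_edges S E"
    obtain u w where u: "u \<in> V - S" and w: "w \<in> V - S" and nuw: "\<not> (adj E')\<^sup>*\<^sup>* u w"
      using nc unfolding connected_graph_def E'_def by blast
    define C where "C = {x\<in>V-S. (adj E')\<^sup>*\<^sup>* u x}"
    define V1 where "V1 = C \<union> S"
    define V2 where "V2 = V - C"
    define E1 where "E1 = {e\<in>E. e \<subseteq> V1}"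
    define E2 where "E2 = {e\<in>E. e \<subseteq> V2}"
    have uC: "u \<in> C" using u by (simp add: C_def)
    have wC: "w \<notin> C" using nuw by (simp add: C_def)
    have cover: "e \<subseteq> V1 \<or> e \<subseteq> V2" if e: "e \<in> E" for e
    proof (rule ccontr)
      assume ne: "\<not> (e \<subseteq> V1 \<or> e \<subseteq> V2)"
      obtain x y where xy: "x \<noteq> y" "e = {x,y}" "x \<in> V" "y \<in> V" using graph_edge[OF g e] by blast
      from ne obtain a b where a: "a \<in> e" "a \<in> C" and b: "b \<in> e" "b \<notin> C" "b \<notin> S"
        unfolding V1_def V2_def using xy by blast
      have aS: "a \<notin> S" using a by (simp add: C_def)
      have ab: "a \<noteq> b" using a b by auto
      have eab: "e = {a,b}" using xy a b ab by auto
      have bV: "b \<in> V" using xy b by auto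
      have "e \<in> E'" using e eab aS b by (auto simp: E'_def del_edges_def)
      then have "adj E' a b" using eab by (simp add: adj_def)
      moreover have "(adj E')\<^sup>*\<^sup>* u a" using a by (simp add: C_def)
      ultimately have "(adj E')\<^sup>*\<^sup>* u b" by simp
      then have "b \<in> C" using bV b by (simp add: C_def)
      then show False using b by simp
    qed
    have sub1: "V1 \<subseteq> V" using S by (auto simp: V1_def C_def)
    have g1: "graph V1 E1" unfolding graph_def
    proof (intro conjI ballI)
      show "finite V1" using sub1 fin by (rule finite_subset)
    next
      fix e assume "e \<in> E1"
      then have "e \<in> E" "e \<subseteq> V1" by (auto simp: E1_def)
      then show "\<exists>u v. u \<noteq> v \<and> e = {u, v} \<and> u \<in> V1 \<and> v \<in> V1" using graph_edge[OF g] by blast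
    qed
    have g2: "graph V2 E2" unfolding graph_def
    proof (intro conjI ballI)
      show "finite V2" using fin by (simp add: V2_def)
    next
      fix e assume "e \<in> E2"
      then have "e \<in> E" "e \<subseteq> V2" by (auto simp: E2_def)
      then show "\<exists>u v. u \<noteq> v \<and> e = {u, v} \<and> u \<in> V2 \<and> v \<in> V2" using graph_edge[OF g] by blast
    qed
    have fr1: "fragile V1 E1" using sub_fragile[OF fr sub1 _ g1] by (auto simp: E1_def)
    have fr2: "fragile V2 E2" using sub_fragile[OF fr _ _ g2] by (auto simp: E2_def V2_def)
    have "{e\<in>E. u\<in>e} = {e\<in>E1. u\<in>e}" using cover uC by (auto simp: E1_def V2_def)
    then have "3 \<le> card V1 - 1" using deg3[of u] u deg_le[OF g1, of u] uC by (simp add: V1_def)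
    then have n1: "4 \<le> card V1" by simp
    have "{e\<in>E. w\<in>e} = {e\<in>E2. w\<in>e}" using cover wC w by (auto simp: E2_def V1_def)
    then have "3 \<le> card V2 - 1" using deg3[of w] w deg_le[OF g2, of w] wC by (simp add: V2_def)
    then have n2: "4 \<le> card V2" by simp
    have l1: "card V1 < n" using cV fin sub1 w wC by (metis DiffD1 DiffD2 UnE V1_def psubset_card_mono psubsetI)
    have l2: "card V2 < n" using cV fin uC u by (metis DiffD1 DiffD2 V2_def Diff_subset psubset_card_mono psubsetI)
    have h1: "2 * card E1 \<le> 5 * card V1 - 10" using less.IH[OF l1 g1 fr1] n1 by simp
    have h2: "2 * card E2 \<le> 5 * card V2 - 10" using less.IH[OF l2 g2 fr2] n2 by simp
    have "E = E1 \<union> E2" using cover by (auto simp: E1_def E2_def)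
    then have "card E \<le> card E1 + card E2" by (metis card_Un_le)
    have "card V1 = card C + card S"
      unfolding V1_def using fin S by (intro card_Un_disjoint) (auto simp: C_def intro: finite_subset)
    moreover have "card V2 = n - card C" using cV fin unfolding V2_def
      by (simp add: card_Diff_subset C_def finite_subset)
    moreover have "card C \<le> n" unfolding cV[symmetric] using fin by (intro card_mono) (auto simp: C_def)
    ultimately have sumV: "card V1 + card V2 = n + card S" by linarith
    have "2 * card E \<le> 2 * card E1 + 2 * card E2" using \<open>card E \<le> card E1 + card E2\<close> by simp
    also have "\<dots> \<le> (5 * card V1 - 10) + (5 * card V2 - 10)" using h1 h2 by (rule add_mono)
    also have "\<dots> = 5 * (card V1 + card V2) - 20" using n1 n2 by simp
    also have "\<dots> = 5 * (n + card S) - 20" using sumV by simp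
    also have "\<dots> \<le> 5 * n - 10" using S(2) by simp
    finally show ?thesis .
  qed
qed

lemma handshake:
  assumes g: "graph V E"
  shows "(\<Sum>v\<in>V. card {e\<in>E. v\<in>e}) = 2 * card E"
proof -
  have fin: "finite V" using g by (simp add: graph_def)
  have finE: "finite E" using graph_finE[OF g] .
  have "(\<Sum>v\<in>V. card {e\<in>E. v\<in>e}) = (\<Sum>v\<in>V. \<Sum>e\<in>E. if v \<in> e then 1 else 0)"
    using finE by (simp add: sum.If_cases Int_def)
  also have "\<dots> = (\<Sum>e\<in>E. \<Sum>v\<in>V. if v \<in> e then 1 else 0)" by (rule sum.swap)
  also have "\<dots> = (\<Sum>e\<in>E. (2::nat))"
  proof (rule sum.cong[OF refl])
    fix e assume "e \<in> E"
    then obtain a b where ab: "a \<noteq> b" "e = {a,b}" "a \<in> V" "b \<in> V" using graph_edge[OF g] by blast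
    have "(\<Sum>v\<in>V. if v \<in> e then 1 else (0::nat)) = card (V \<inter> e)"
      using fin by (simp add: sum.If_cases)
    also have "V \<inter> e = {a,b}" using ab by auto
    finally show "(\<Sum>v\<in>V. if v \<in> e then 1 else (0::nat)) = 2" using ab by simp
  qed
  finally show ?thesis by simp
qed

theorem mainTheorem3:
  fixes V :: "'a set" and E :: "'a set set"
  assumes "graph V E" and "fragile V E"
  shows "(card V \<ge> 4 \<longrightarrow> real (card E) \<le> 2.5 * real (card V) - 5)
       \<and> (V \<noteq> {} \<longrightarrow> (\<exists>v\<in>V. degree E v \<le> 4))"
proof (intro conjI impI)
  assume "card V \<ge> 4"
  then have "2 * card E \<le> 5 * card V - 10" using main[OF assms refl] by simp
  then have "real (2 * card E) \<le> real (5 * card V - 10)" by linarith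
  then show "real (card E) \<le> 2.5 * real (card V) - 5" using \<open>card V \<ge> 4\<close> by (simp add: of_nat_diff)
next
  assume ne: "V \<noteq> {}"
  have fin: "finite V" using assms(1) by (simp add: graph_def)
  show "\<exists>v\<in>V. degree E v \<le> 4"
  proof (cases "card V \<ge> 4")
    case True
    have m: "2 * card E \<le> 5 * card V - 10" using main[OF assms refl True] .
    show ?thesis
    proof (rule ccontr)
      assume "\<not> ?thesis"
      then have "\<And>v. v \<in> V \<Longrightarrow> 5 \<le> card {e\<in>E. v\<in>e}" by (force simp: degree_def)
      then have "(\<Sum>v\<in>V. (5::nat)) \<le> (\<Sum>v\<in>V. card {e\<in>E. v\<in>e})" by (intro sum_mono) auto
      then have "5 * card V \<le> 2 * card E" using handshake[OF assms(1)] by simp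
      then show False using m True by linarith
    qed
  next
    case False
    obtain v where v: "v \<in> V" using ne by blast
    have "card {e\<in>E. v\<in>e} \<le> card V - 1" using deg_le[OF assms(1) v] .
    then have "card {e\<in>E. v\<in>e} \<le> 4" using False by linarith
    then show ?thesis using v by (auto simp: degree_def)
  qed
qed

end
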